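(* Let $n\ge2$ be an integer and $\xi\in\mathbb{R}$. For every algebraic number $\alpha$ of degree $n$ with conjugates $\alpha_1,\dots,\alpha_n$, one has \[ \max_{1\le i\le n} |\xi-\alpha_i| \ge \tfrac12 H(\alpha)^{-2/n}. \]
   Context: The height $H(\alpha)$ of an algebraic number $\alpha\in\mathbb{C}$ is the largest absolute value of the coefficients of its irreducible (minimal) polynomial in $\mathbb{Z}[T]$. The conjugates of $\alpha$ are the roots of this polynomial. *)

theory Defs
  imports "HOL-Analysis.Analysis" "HOL-Computational_Algebra.Computational_Algebra"
begin

text \<open>The minimal polynomial of an algebraic number in Z[T]: the irreducible integer
  polynomial with positive leading coefficient having the number as a root
  (irreducible in Z[T] forces primitivity, so it is unique for algebraic numbers).\<close>
definition min_int_poly :: "complex \<Rightarrow> int poly" where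
  "min_int_poly \<alpha> = (THE p. irreducible p \<and> lead_coeff p > 0 \<and>
       poly (map_poly of_int p) \<alpha> = 0)"

definition alg_degree :: "complex \<Rightarrow> nat" where
  "alg_degree \<alpha> = degree (min_int_poly \<alpha>)"

definition height :: "complex \<Rightarrow> int" where
  "height \<alpha> = Max ((\<lambda>i. \<bar>coeff (min_int_poly \<alpha>) i\<bar>) ` {..degree (min_int_poly \<alpha>)})"

definition conjugates :: "complex \<Rightarrow> complex set" where
  "conjugates \<alpha> = {\<beta>. poly (map_poly of_int (min_int_poly \<alpha>)) \<beta> = 0}"

end

theory Submission
  imports Defs "Subresultants.Subresultant_Gcd"
begin

lemma poly_complex_roots:
  fixes f :: "complex poly"
  shows "poly f x = lead_coeff f * (\<Prod>a\<in>#proots f. x - a)"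
proof -
  have "poly f x = poly (Polynomial.smult (lead_coeff f) (\<Prod>a\<in>#proots f. [:-a, 1:])) x"
    by (simp only: complex_poly_decompose_multiset)
  also have "\<dots> = lead_coeff f * (\<Prod>a\<in>#proots f. x - a)"
    by (simp add: poly_prod_mset)
  finally show ?thesis .
qed

lemma prod_mset_neg_swap:
  "(\<Prod>b\<in>#B. (b - x :: complex)) = (-1) ^ size B * (\<Prod>b\<in>#B. x - b)"
  by (induction B) (auto simp: algebra_simps)

lemma prod_mset_cmult:
  "(\<Prod>b\<in>#B. c * (f b :: complex)) = c ^ size B * (\<Prod>b\<in>#B. f b)"
  by (induction B) (auto simp: algebra_simps)

lemma double_prod_sign:
  "(\<Prod>b\<in>#B. \<Prod>a\<in>#A. (b - a :: complex)) = (-1)^(size A * size B) * (\<Prod>a\<in>#A. \<Prod>b\<in>#B. a - b)"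
proof (induction A)
  case empty
  then show ?case by simp
next
  case (add x A)
  have "(\<Prod>b\<in>#B. \<Prod>a\<in>#add_mset x A. (b - a)) = (\<Prod>b\<in>#B. (b - x) * (\<Prod>a\<in>#A. (b - a)))"
    by simp
  also have "\<dots> = (\<Prod>b\<in>#B. (b - x)) * (\<Prod>b\<in>#B. \<Prod>a\<in>#A. (b - a))"
    by (rule prod_mset.distrib)
  also have "\<dots> = (-1) ^ size B * (\<Prod>b\<in>#B. x - b) * ((-1)^(size A * size B) * (\<Prod>a\<in>#A. \<Prod>b\<in>#B. a - b))"
    by (simp add: prod_mset_neg_swap add.IH)
  also have "\<dots> = (-1)^(size (add_mset x A) * size B) * (\<Prod>a\<in>#add_mset x A. \<Prod>b\<in>#B. a - b)"
    by (simp add: power_add algebra_simps)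
  finally show ?case .
qed

definition Eres :: "complex poly \<Rightarrow> complex poly \<Rightarrow> complex" where
  "Eres f g = lead_coeff g ^ degree f * (\<Prod>b\<in>#proots g. poly f b)"

lemma E_expand:
  "Eres f g = lead_coeff g ^ degree f * lead_coeff f ^ degree g * (\<Prod>b\<in>#proots g. \<Prod>a\<in>#proots f. b - a)"
  unfolding Eres_def poly_complex_roots[of f]
  by (simp add: prod_mset_cmult size_proots_complex)

lemma E_swap: "Eres g f = (-1)^(degree f * degree g) * Eres f g"
  unfolding E_expand double_prod_sign[of "proots g" "proots f"]
  by (simp add: size_proots_complex algebra_simps)
  
lemma neg1_sq: "((-1::complex)^k) * (-1)^k = 1"
  by (simp flip: power_mult_distrib)

lemma res_formula_ge:
  fixes f g :: "complex poly"
  assumes "degree g \<le> degree f" "f \<noteq> 0" "g \<noteq> 0"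
  shows "resultant f g = (-1)^(degree f * degree g) * Eres f g"
  using assms
proof (induction "degree g" arbitrary: f g rule: less_induct)
  case less
  show ?case
  proof (cases "degree g = 0")
    case True
    then obtain c where g: "g = [:c:]" by (metis degree_eq_zeroE)
    then show ?thesis by (simp add: Eres_def)
  next
    case False
    define H where "H = f mod g"
    define B where "B = - (f div g)"
    have FGH: "f + B * g = H" unfolding H_def B_def using div_mult_mod_eq[of f g]
      by (simp add: algebra_simps)
    have dH: "degree H < degree g" using degree_mod_less[OF \<open>g \<noteq> 0\<close>, of f] False
      unfolding H_def by auto
    have roots_eq: "image_mset (poly f) (proots g) = image_mset (poly H) (proots g)"
    proof (rule image_mset_cong)
      fix b assume "b \<in># proots g"
      hence "poly g b = 0" using \<open>g \<noteq> 0\<close> by simp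
      thus "poly f b = poly H b" using arg_cong[OF FGH, of "\<lambda>p. poly p b"] by simp
    qed
    have sz: "size (proots g) = degree g" by (rule size_proots_complex)
    show ?thesis
    proof (cases "H = 0")
      case True
      have "f = (f div g) * g" using FGH True unfolding B_def by (simp add: algebra_simps)
      from subresultant_product[OF this less.prems(1), of 0] False
      have "subresultant 0 f g = 0" by simp
      hence r0: "resultant f g = 0" by (simp add: subresultant_resultant)
      from sz False have "proots g \<noteq> {#}" by auto
      then obtain b where b: "b \<in># proots g" by blast
      have "poly H b = 0" using True by simp
      hence "0 \<in># image_mset (poly f) (proots g)" using roots_eq b
        by (metis image_eqI set_image_mset)
      hence "Eres f g = 0" by (simp add: Eres_def prod_mset_zero_iff)
      with r0 show ?thesis by simp
    next
      case Hnz: False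
      show ?thesis
      proof (cases "degree H = 0")
        case True
        then obtain h where Hh: "H = [:h:]" by (metis degree_eq_zeroE)
        have "subresultant (degree H) f g = Polynomial.smult
          ((- 1) ^ ((degree f - degree H) * (degree g - degree H)) *
           lead_coeff g ^ (degree f - degree H) * lead_coeff H ^ (degree g - degree H - 1)) H"
          by (rule BT_lemma_1_13[OF FGH less.prems(1)]) (use dH in auto)
        hence "[:resultant f g:] = Polynomial.smult
          ((- 1) ^ (degree f * degree g) * lead_coeff g ^ degree f * h ^ (degree g - 1)) [:h:]"
          using True Hh by (simp add: subresultant_resultant)
        hence r: "resultant f g = (- 1) ^ (degree f * degree g) * lead_coeff g ^ degree f * (h ^ (degree g - 1) * h)"
          by (simp add: algebra_simps)
        have "h ^ (degree g - 1) * h = h ^ degree g" using False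
          by (cases "degree g") (simp_all add: power_Suc2)
        moreover have "Eres f g = lead_coeff g ^ degree f * h ^ degree g"
        proof -
          have "image_mset (poly [:h:]) (proots g) = image_mset (\<lambda>_. h) (proots g)"
            by (rule image_mset_cong) simp
          thus ?thesis unfolding Eres_def roots_eq Hh by (simp add: sz prod_mset_constant)
        qed
        ultimately show ?thesis using r by simp
      next
        case dHp: False
        have "subresultant 0 f g = Polynomial.smult ((- 1) ^ ((degree f - 0) * (degree g - 0)) *
           lead_coeff g ^ (degree f - degree H)) (subresultant 0 g H)"
          by (rule BT_lemma_1_12[OF FGH less.prems(1)]) (use dH dHp in auto)
        hence R: "resultant f g = (-1)^(degree f * degree g) * lead_coeff g ^ (degree f - degree H) * resultant g H"
          by (simp add: subresultant_resultant)
        have IH: "resultant g H = (-1)^(degree g * degree H) * Eres g H"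
          by (rule less.hyps) (use dH Hnz less.prems in auto)
        have "Eres g H = (-1)^(degree H * degree g) * Eres H g" by (rule E_swap)
        hence RgH: "resultant g H = Eres H g" using IH neg1_sq[of "degree g * degree H"]
          by (simp add: mult.commute)
        have "Eres H g = lead_coeff g ^ degree H * prod_mset (image_mset (poly f) (proots g))"
          unfolding Eres_def roots_eq ..
        moreover have "lead_coeff g ^ (degree f - degree H) * lead_coeff g ^ degree H = lead_coeff g ^ degree f"
          using dH less.prems(1) by (simp flip: power_add)
        ultimately show ?thesis using R RgH roots_eq unfolding Eres_def by (simp add: algebra_simps)
      qed
    qed
  qed
qed

lemma res_formula:
  fixes f g :: "complex poly"
  assumes "f \<noteq> 0" "g \<noteq> 0"
  shows "resultant f g = Eres g f"
proof (cases "degree g \<le> degree f")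
  case True
  then show ?thesis using res_formula_ge[OF True assms] E_swap[of g f] neg1_sq[of "degree f * degree g"]
    by (simp add: mult.commute)
next
  case False
  hence "degree f \<le> degree g" by simp
  from res_formula_ge[OF this assms(2,1)] resultant_swap[of f g]
  show ?thesis using neg1_sq[of "degree f * degree g"] by (simp add: mult.commute mult.left_commute)
qed

lemma int_poly_common_root_eq:
  fixes p q :: "int poly" and \<alpha> :: complex
  assumes ip: "irreducible p" and iq: "irreducible q"
    and lp: "lead_coeff p > 0" and lq: "lead_coeff q > 0"
    and rp: "poly (of_int_poly p) \<alpha> = 0" and rq: "poly (of_int_poly q) \<alpha> = 0"
  shows "p = q"
proof -
  have p0: "p \<noteq> 0" and q0: "q \<noteq> 0" using ip iq by auto
  let ?pc = "of_int_poly p :: complex poly" and ?qc = "of_int_poly q :: complex poly"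
  have pc0: "?pc \<noteq> 0" and qc0: "?qc \<noteq> 0" using p0 q0 by auto
  have "\<alpha> \<in># proots ?pc" using pc0 rp by simp
  hence "0 \<in># image_mset (poly ?qc) (proots ?pc)" using rq by (metis image_eqI set_image_mset)
  hence "Eres ?qc ?pc = 0" by (simp add: Eres_def prod_mset_zero_iff)
  hence "resultant ?pc ?qc = 0" using res_formula[OF pc0 qc0] by simp
  hence "(of_int (resultant p q) :: complex) = 0" by (simp add: of_int_hom.resultant_hom)
  hence "resultant p q = 0" by simp
  hence dg: "degree (gcd p q) \<noteq> 0" by (simp add: resultant_0_gcd)
  obtain k where pk: "p = gcd p q * k" by (meson dvd_def gcd_dvd1)
  from irreducibleD[OF ip pk] have "is_unit (gcd p q) \<or> is_unit k" .
  moreover have "\<not> is_unit (gcd p q)" using dg by (auto simp: is_unit_poly_iff)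
  ultimately have ku: "is_unit k" by simp
  have "p dvd q" using pk ku by (metis gcd_dvd2 mult_unit_dvd_iff)
  then obtain m where qm: "q = p * m" by (meson dvd_def)
  from irreducibleD[OF iq qm] have "is_unit p \<or> is_unit m" .
  hence mu: "is_unit m" using ip by (auto simp: irreducible_def)
  then obtain c where mc: "m = [:c:]" and "is_unit c" by (auto simp: is_unit_poly_iff)
  hence "c = 1 \<or> c = -1" by auto
  moreover have "lead_coeff q = lead_coeff p * c" using qm mc by (simp add: lead_coeff_mult)
  ultimately have "c = 1" using lp lq by (auto simp: mult_less_0_iff)
  thus ?thesis using qm mc by simp
qed

lemma poly_of_int_prod_mset:
  "poly (of_int_poly (prod_mset A)) (\<alpha>::complex) = (\<Prod>x\<in>#A. poly (of_int_poly x) \<alpha>)"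
  by (induction A) (simp_all add: of_int_poly_hom.hom_mult)

lemma min_poly_exists:
  assumes "algebraic (\<alpha>::complex)"
  shows "\<exists>p. irreducible p \<and> lead_coeff p > 0 \<and> poly (of_int_poly p) \<alpha> = (0::complex)"
proof -
  from assms obtain p :: "complex poly" where pint: "\<forall>i. coeff p i \<in> \<int>" and p0: "p \<noteq> 0"
    and rp: "poly p \<alpha> = 0" unfolding algebraic_def by auto
  define p' :: "int poly" where "p' = map_poly (\<lambda>c. \<lfloor>Re c\<rfloor>) p"
  have pp': "of_int_poly p' = p"
  proof (rule poly_eqI)
    fix i
    from pint obtain k where "coeff p i = of_int k" by (meson Ints_cases)
    thus "coeff (of_int_poly p') i = coeff p i" unfolding p'_def
      by (simp add: coeff_map_poly)
  qed
  have p'0: "p' \<noteq> 0" using p0 pp' by auto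
  have "p' dvd normalize (prod_mset (prime_factorization p'))"
    unfolding prod_mset_prime_factorization_weak[OF p'0] by simp
  hence "p' dvd prod_mset (prime_factorization p')" by simp
  then obtain k where k: "prod_mset (prime_factorization p') = p' * k" by (meson dvd_def)
  have "poly (of_int_poly (prod_mset (prime_factorization p'))) \<alpha> = (0::complex)"
    unfolding k using rp pp' by (simp add: of_int_poly_hom.hom_mult)
  hence "(\<Prod>x\<in>#prime_factorization p'. poly (of_int_poly x) \<alpha>) = (0::complex)"
    by (simp add: poly_of_int_prod_mset)
  then obtain x where x: "x \<in># prime_factorization p'" and rx: "poly (of_int_poly x) \<alpha> = (0::complex)"
    by (auto simp: prod_mset_zero_iff)
  have ix: "irreducible x" using in_prime_factors_imp_prime[OF x] by (simp add: prime_def prime_elem_imp_irreducible)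
  hence x0: "x \<noteq> 0" by auto
  show ?thesis
  proof (cases "lead_coeff x > 0")
    case True
    then show ?thesis using ix rx by blast
  next
    case False
    hence neg: "lead_coeff x < 0" using x0 by (metis leading_coeff_0_iff linorder_neqE_linordered_idom)
    have "irreducible (x * [:-1:])" using ix by (subst irreducible_mult_unit_right) (auto simp: is_unit_poly_iff)
    moreover have "lead_coeff (x * [:-1:]) > 0" using neg by (simp add: lead_coeff_mult)
    moreover have "poly (of_int_poly (x * [:-1:])) \<alpha> = (0::complex)" using rx by (simp add: of_int_poly_hom.hom_uminus)
    ultimately show ?thesis by blast
  qed
qed

lemma min_int_poly_props:
  assumes "algebraic \<alpha>"
  shows "irreducible (min_int_poly \<alpha>) \<and> lead_coeff (min_int_poly \<alpha>) > 0 \<and>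
         poly (of_int_poly (min_int_poly \<alpha>)) \<alpha> = 0"
proof -
  have "\<exists>!p. irreducible p \<and> lead_coeff p > 0 \<and> poly (of_int_poly p) \<alpha> = 0"
    using min_poly_exists[OF assms] int_poly_common_root_eq by blast
  thus ?thesis unfolding min_int_poly_def by (rule theI')
qed

lemma lc_dvd_resultant:
  fixes p q :: "int poly"
  assumes dv: "lead_coeff p dvd lead_coeff q" and d: "0 < degree p + degree q"
  shows "lead_coeff p dvd resultant p q"
proof -
  let ?N = "degree p + degree q"
  have "resultant p q = (\<Sum>i<?N. sylvester_mat p q $$ (i,0) * cofactor (sylvester_mat p q) i 0)"
    unfolding resultant_def by (rule laplace_expansion_column[OF sylvester_carrier_mat d])
  also have "lead_coeff p dvd \<dots>"
  proof (rule dvd_sum)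
    fix i assume "i \<in> {..<?N}"
    hence i: "i < ?N" by simp
    have "lead_coeff p dvd sylvester_mat p q $$ (i,0)"
      unfolding sylvester_index_mat[OF i d] using dv by auto
    thus "lead_coeff p dvd sylvester_mat p q $$ (i,0) * cofactor (sylvester_mat p q) i 0" by simp
  qed
  finally show ?thesis .
qed

lemma norm_prod_mset_le:
  assumes "\<And>x. x \<in># A \<Longrightarrow> cmod (f x) \<le> c"
  shows "cmod (\<Prod>x\<in>#A. f x) \<le> c ^ size A"
  using assms
proof (induction A)
  case empty
  then show ?case by simp
next
  case (add y A)
  have "cmod (f y) \<le> c" using add.prems by simp
  hence c0: "0 \<le> c" using norm_ge_zero order_trans by blast
  have "cmod (\<Prod>x\<in>#add_mset y A. f x) = cmod (f y) * cmod (\<Prod>x\<in>#A. f x)"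
    by (simp add: norm_mult)
  also have "\<dots> \<le> c * c ^ size A"
    by (rule mult_mono) (use add c0 in auto)
  finally show ?case by simp
qed

lemma deriv_at_root:
  fixes f :: "complex poly"
  assumes "b \<in># proots f"
  shows "poly (pderiv f) b = lead_coeff f * (\<Prod>x\<in>#proots f - {#b#}. b - x)"
proof -
  define R0 where "R0 = proots f - {#b#}"
  have R: "proots f = add_mset b R0" unfolding R0_def using assms by simp
  define Q where "Q = Polynomial.smult (lead_coeff f) (\<Prod>x\<in>#R0. [:-x, 1:])"
  have "f = Polynomial.smult (lead_coeff f) (\<Prod>x\<in>#proots f. [:-x, 1:])"
    by (simp only: complex_poly_decompose_multiset)
  also have "\<dots> = [:-b, 1:] * Q" unfolding R Q_def by (simp add: algebra_simps)
  finally have fQ: "f = [:-b, 1:] * Q" .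
  have d1: "pderiv [:-b, 1:] = 1" by (simp add: pderiv_pCons)
  have "pderiv f = [:-b, 1:] * pderiv Q + Q * pderiv [:-b, 1:]"
    by (subst fQ) (simp only: pderiv_mult)
  hence "poly (pderiv f) b = poly Q b" unfolding d1 by simp
  also have "\<dots> = lead_coeff f * (\<Prod>x\<in>#R0. b - x)" unfolding Q_def by (simp add: poly_prod_mset)
  finally show ?thesis unfolding R0_def .
qed

lemma final_arith:
  fixes A d :: real and m :: nat
  assumes A1: "A \<ge> 1" and d0: "d \<ge> 0" and m1: "m \<ge> 1"
    and ineq: "A \<le> A^m * (A * d^m)^(Suc m)"
  shows "A powr (-2/real (Suc m)) \<le> d"
proof -
  define n where "n = Suc m"
  have A0: "A > 0" using A1 by simp
  have e1: "A^m * (A * d^m)^n = A^(m+n) * d^(m*n)"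
    by (simp add: power_mult_distrib power_mult power_add)
  have "m + n = Suc (2*m)" by (simp add: n_def mult_2)
  hence "A^(m+n) = A * A^(2*m)" by (metis power_Suc)
  with e1 have eq: "A^m * (A * d^m)^n = A * (A^(2*m) * d^(m*n))" by simp
  have ineq': "A \<le> A^m * (A * d^m)^n" using ineq unfolding n_def .
  have "A * 1 \<le> A * (A^(2*m) * d^(m*n))" using ineq' unfolding eq by simp
  hence X: "1 \<le> A^(2*m) * d^(m*n)" using A0 by (simp only: mult_le_cancel_left_pos)
  define t where "t = A powr (-2/real n)"
  have "t^(m*n) = A powr (real (m*n) * (-2/real n))" unfolding t_def
    using A0 by (simp add: powr_power)
  also have "real (m*n) * (-2/real n) = - real (2*m)" unfolding n_def by (simp add: field_simps)
  also have "A powr (- real (2*m)) = inverse (A^(2*m))" using A0 powr_realpow[OF A0, of "2*m"] by (simp add: powr_minus)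
  finally have tp: "t^(m*n) = inverse (A^(2*m))" .
  have Ap: "A^(2*m) > 0" using A0 by simp
  have le: "t^(m*n) \<le> d^(m*n)" unfolding tp using X Ap by (simp add: field_simps)
  obtain k where k: "m * n = Suc k" using m1 unfolding n_def by (metis Suc_pred mult_pos_pos neq0_conv not_one_le_zero zero_less_Suc)
  have "t \<le> d" by (rule power_le_imp_le_base[of t k d]) (use le k d0 in auto)
  thus ?thesis unfolding t_def n_def .
qed

theorem mainTheorem6:
  fixes n :: nat and \<xi> :: real and \<alpha> :: complex
  assumes "n \<ge> 2" and "algebraic \<alpha>" and "alg_degree \<alpha> = n"
  shows "Max ((\<lambda>\<beta>. cmod (complex_of_real \<xi> - \<beta>)) ` conjugates \<alpha>)
           \<ge> 1/2 * (real_of_int (height \<alpha>)) powr (- 2 / real n)"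
proof -
  define P where "P = min_int_poly \<alpha>"
  have iP: "irreducible P" and lP: "lead_coeff P > 0" and rP: "poly (of_int_poly P) \<alpha> = (0::complex)"
    using min_int_poly_props[OF assms(2)] unfolding P_def by auto
  have dP: "degree P = n" using assms(3) unfolding alg_degree_def P_def .
  define a where "a = lead_coeff P"
  define Pc where "Pc = (of_int_poly P :: complex poly)"
  have a0: "0 < a" using lP unfolding a_def .
  have P0: "P \<noteq> 0" using iP by auto
  have Pc0: "Pc \<noteq> 0" using P0 unfolding Pc_def by simp
  have lcPc: "lead_coeff Pc = of_int a" unfolding Pc_def a_def by (rule of_int_hom.hom_lead_coeff)
  have dPc: "degree Pc = n" unfolding Pc_def using dP by simp
  define D where "D = pderiv P"
  have Dc: "of_int_poly D = pderiv Pc" unfolding D_def Pc_def by (rule of_int_hom.map_poly_pderiv)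
  have D0: "D \<noteq> 0" using dP assms(1) by (simp add: D_def pderiv_eq_0_iff)
  have dD: "degree D = n - 1" by (simp add: D_def degree_pderiv dP)
  have Dc0: "pderiv Pc \<noteq> 0" using D0 Dc[symmetric] by simp
  have dDc: "degree (pderiv Pc) = n - 1" using dPc by (simp add: degree_pderiv)
  define R where "R = resultant P D"
  have R0: "R \<noteq> 0"
  proof
    assume "R = 0"
    hence dg: "degree (gcd P D) \<noteq> 0" by (simp add: R_def resultant_0_gcd)
    obtain k where pk: "P = gcd P D * k" by (meson dvd_def gcd_dvd1)
    from irreducibleD[OF iP pk] have "is_unit (gcd P D) \<or> is_unit k" .
    moreover have "\<not> is_unit (gcd P D)" using dg by (auto simp: is_unit_poly_iff)
    ultimately have ku: "is_unit k" by simp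
    have "P dvd D" using pk ku by (metis gcd_dvd2 mult_unit_dvd_iff)
    from dvd_imp_degree_le[OF this D0] dP dD assms(1) show False by simp
  qed
  have "lead_coeff P dvd lead_coeff D"
  proof -
    have "lead_coeff D = coeff (pderiv P) (n - 1)" unfolding D_def using dD D_def by simp
    also have "\<dots> = of_nat n * coeff P n" using assms(1) by (simp add: coeff_pderiv)
    finally show ?thesis using dP by simp
  qed
  hence aR: "a dvd R" unfolding a_def R_def using dP assms(1) by (intro lc_dvd_resultant) auto
  have "(of_int R :: complex) = resultant Pc (pderiv Pc)"
    unfolding R_def Dc[symmetric] unfolding Pc_def by (rule of_int_hom.resultant_hom[symmetric])
  also have "\<dots> = Eres (pderiv Pc) Pc" by (rule res_formula[OF Pc0 Dc0])
  also have "\<dots> = of_int a ^ (n - 1) * (\<Prod>b\<in>#proots Pc. poly (pderiv Pc) b)"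
    unfolding Eres_def lcPc dDc ..
  finally have Rform: "(of_int R :: complex) = of_int a ^ (n - 1) * (\<Prod>b\<in>#proots Pc. poly (pderiv Pc) b)" .
  define \<delta> where "\<delta> = Max ((\<lambda>\<beta>. cmod (complex_of_real \<xi> - \<beta>)) ` conjugates \<alpha>)"
  have conj: "conjugates \<alpha> = {\<beta>. poly Pc \<beta> = 0}" unfolding conjugates_def Pc_def P_def by simp
  have fin: "finite (conjugates \<alpha>)" unfolding conj using poly_roots_finite[OF Pc0] .
  have rootb: "cmod (complex_of_real \<xi> - b) \<le> \<delta>" if "b \<in># proots Pc" for b
  proof -
    have "b \<in> conjugates \<alpha>" using that Pc0 unfolding conj by simp
    thus ?thesis unfolding \<delta>_def using fin by (intro Max_ge) auto
  qed
  have "\<alpha> \<in># proots Pc" using rP Pc0 unfolding Pc_def by simp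
  hence d0: "0 \<le> \<delta>" using rootb[of \<alpha>] norm_ge_zero order_trans by blast
  have bnd: "cmod (poly (pderiv Pc) b) \<le> real_of_int a * (2*\<delta>)^(n-1)" if b: "b \<in># proots Pc" for b
  proof -
    have "cmod (poly (pderiv Pc) b) = real_of_int a * cmod (\<Prod>x\<in>#proots Pc - {#b#}. b - x)"
      unfolding deriv_at_root[OF b] lcPc norm_mult using lP unfolding a_def by simp
    also have "cmod (\<Prod>x\<in>#proots Pc - {#b#}. b - x) \<le> (2*\<delta>) ^ size (proots Pc - {#b#})"
    proof (rule norm_prod_mset_le)
      fix x assume "x \<in># proots Pc - {#b#}"
      hence x: "x \<in># proots Pc" by (rule in_diffD)
      have "cmod (b - x) = cmod ((b - complex_of_real \<xi>) + (complex_of_real \<xi> - x))" by simp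
      also have "\<dots> \<le> cmod (b - complex_of_real \<xi>) + cmod (complex_of_real \<xi> - x)" by (rule norm_triangle_ineq)
      also have "\<dots> \<le> \<delta> + \<delta>" using rootb[OF b] rootb[OF x] by (simp add: norm_minus_commute add_mono)
      finally show "cmod (b - x) \<le> 2 * \<delta>" by simp
    qed
    also have "size (proots Pc - {#b#}) = n - 1" using b dPc by (simp add: size_Diff_singleton size_proots_complex)
    finally show ?thesis using lP unfolding a_def by (simp add: mult_left_mono)
  qed
  have "\<bar>real_of_int R\<bar> = cmod (of_int R :: complex)" by simp
  also have "\<dots> = real_of_int a ^ (n - 1) * cmod (\<Prod>b\<in>#proots Pc. poly (pderiv Pc) b)"
    unfolding Rform norm_mult norm_power using lP unfolding a_def by simp
  also have "\<dots> \<le> real_of_int a ^ (n - 1) * (real_of_int a * (2*\<delta>)^(n-1)) ^ size (proots Pc)"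
    by (rule mult_left_mono[OF norm_prod_mset_le[OF bnd]]) (use a0 in auto)
  also have "size (proots Pc) = n" using dPc by (simp add: size_proots_complex)
  finally have up: "\<bar>real_of_int R\<bar> \<le> real_of_int a ^ (n - 1) * (real_of_int a * (2*\<delta>)^(n-1)) ^ n" .
  obtain k where Rk: "R = a * k" using aR by (meson dvd_def)
  have k0: "k \<noteq> 0" using R0 Rk by simp
  have "a \<le> \<bar>R\<bar>" using Rk k0 lP unfolding a_def
    by (simp add: abs_mult)
  hence low: "real_of_int a \<le> \<bar>real_of_int R\<bar>" by linarith
  have a1: "real_of_int a \<ge> 1" using lP unfolding a_def by simp
  obtain m where nm: "n = Suc m" using assms(1) by (cases n) auto
  have m1: "m \<ge> 1" using assms(1) nm by simp
  have ineq: "real_of_int a \<le> real_of_int a ^ m * (real_of_int a * (2*\<delta>)^m) ^ Suc m"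
    using order_trans[OF low up] unfolding nm by simp
  have key: "real_of_int a powr (-2 / real n) \<le> 2 * \<delta>"
    unfolding nm by (rule final_arith[OF a1 _ m1 ineq]) (use d0 in simp)
  have "a \<le> height \<alpha>"
  proof -
    have "\<bar>coeff P (degree P)\<bar> \<in> (\<lambda>i. \<bar>coeff P i\<bar>) ` {..degree P}" by auto
    hence "\<bar>coeff P (degree P)\<bar> \<le> height \<alpha>" unfolding height_def P_def[symmetric] by (intro Max_ge) auto
    thus ?thesis using lP unfolding a_def by simp
  qed
  hence "real_of_int (height \<alpha>) powr (- 2 / real n) \<le> real_of_int a powr (- 2 / real n)"
    using lP unfolding a_def by (intro powr_mono2') auto
  with key show ?thesis unfolding \<delta>_def by simp
qed

end
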